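(* Suppose $(X,y)$ is orthogonal separable. Let $(W_1,w_2,\lambda)$ be a KKT point (B-subdifferential sense) of the non-convex max-margin problem, and suppose it contains two neurons $i_+,i_-$ with $w_{2,i_+}\ne0$, $w_{2,i_-}\ne0$ whose associated diagonal matrices $\hat D_{i_+},\hat D_{i_-}$ (as in the context) satisfy $$\hat D_{i_+}\ge\mathrm{diag}(\mathbb I(y=1)),\qquad\hat D_{i_-}\ge\mathrm{diag}(\mathbb I(y=-1)).$$ Then $\lambda$ is dual feasible, i.e. $\max_{u:\|u\|_2\le1}|\lambda^T(Xu)_+|\le1$.
   Context: Binary setting: $X\in\mathbb R^{N\times d}$ rows $x_n$, $y\in\{\pm1\}^N$, $Y=\mathrm{diag}(y)$. $(X,y)$ is orthogonal separable if $x_n^Tx_{n'}>0$ whenever $y_n=y_{n'}$ and $x_n^Tx_{n'}\le0$ whenever $y_n\ne y_{n'}$. Non-convex max-margin problem: $\min\frac12(\|W_1\|_F^2+\|w_2\|_2^2)$ s.t. $Y(XW_1)_+w_2\ge\mathbf 1$. KKT point (B-subdifferential): $Y\lambda\ge0$, primal feasibility, $\lambda_n(y_n(x_n^TW_1)_+w_2-1)=0$, $w_2=(XW_1)_+^T\lambda$, and for each $i$, $w_{1,i}=w_{2,i}X^T\hat D_i\lambda$ where $\hat D_i$ is diagonal with $(\hat D_i)_{nn}=1$ if $x_n^Tw_{1,i}>0$, $0$ if $x_n^Tw_{1,i}<0$, $\in\{0,1\}$ if $x_n^Tw_{1,i}=0$. Matrix inequalities between diagonal matrices are entrywise; $\mathbb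 I(y=1)$ is the $0/1$ indicator vector. *)

theory Defs
  imports "HOL-Analysis.Analysis"
begin

text \<open>Data: samples indexed by a finite type 'n, features real^'d, neurons indexed by a
finite type 'm. x n is the n-th row of X, y n in {1,-1} the label.
The first-layer weight matrix W1 is represented by its columns w1 i :: real^'d,
the second layer by w2 :: real^'m, the dual variable by lam :: real^'n.\<close>

definition relu :: "real \<Rightarrow> real" where
  "relu t = max t 0"

definition labels :: "('n \<Rightarrow> real) \<Rightarrow> bool" where
  "labels y \<longleftrightarrow> (\<forall>n. y n = 1 \<or> y n = -1)"

definition orth_separable :: "('n \<Rightarrow> real^'d) \<Rightarrow> ('n \<Rightarrow> real) \<Rightarrow> bool" where
  "orth_separable x y \<longleftrightarrow>
     (\<forall>n n'. y n = y n' \<longrightarrow> x n \<bullet> x n' > 0) \<and>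
     (\<forall>n n'. y n \<noteq> y n' \<longrightarrow> x n \<bullet> x n' \<le> 0)"

definition net_out :: "('n \<Rightarrow> real^'d) \<Rightarrow> ('m::finite \<Rightarrow> real^'d) \<Rightarrow> real^'m \<Rightarrow> 'n \<Rightarrow> real" where
  "net_out x w1 w2 n = (\<Sum>i\<in>UNIV. relu (x n \<bullet> w1 i) * w2 $ i)"

text \<open>D i is the diagonal of the matrix \<open>\<hat>D_i\<close> (as a function 'n => real).\<close>
definition admissible_D :: "('n \<Rightarrow> real^'d) \<Rightarrow> (real^'d) \<Rightarrow> ('n \<Rightarrow> real) \<Rightarrow> bool" where
  "admissible_D x w Dd \<longleftrightarrow>
     (\<forall>n. (x n \<bullet> w > 0 \<longrightarrow> Dd n = 1) \<and> (x n \<bullet> w < 0 \<longrightarrow> Dd n = 0) \<and>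
          (x n \<bullet> w = 0 \<longrightarrow> Dd n = 0 \<or> Dd n = 1))"

definition kkt_point ::
  "('n::finite \<Rightarrow> real^'d) \<Rightarrow> ('n \<Rightarrow> real) \<Rightarrow> ('m::finite \<Rightarrow> real^'d) \<Rightarrow> real^'m \<Rightarrow> real^'n
     \<Rightarrow> ('m \<Rightarrow> 'n \<Rightarrow> real) \<Rightarrow> bool" where
  "kkt_point x y w1 w2 lam D \<longleftrightarrow>
     (\<forall>n. y n * lam $ n \<ge> 0) \<and>
     (\<forall>n. y n * net_out x w1 w2 n \<ge> 1) \<and>
     (\<forall>n. lam $ n * (y n * net_out x w1 w2 n - 1) = 0) \<and>
     (\<forall>i. w2 $ i = (\<Sum>n\<in>UNIV. lam $ n * relu (x n \<bullet> w1 i))) \<and>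
     (\<forall>i. admissible_D x (w1 i) (D i)) \<and>
     (\<forall>i. w1 i = w2 $ i *\<^sub>R (\<Sum>n\<in>UNIV. (D i n * lam $ n) *\<^sub>R x n))"

definition dual_feasible :: "('n::finite \<Rightarrow> real^'d) \<Rightarrow> real^'n \<Rightarrow> bool" where
  "dual_feasible x lam \<longleftrightarrow>
     (\<forall>u::real^'d. norm u \<le> 1 \<longrightarrow> \<bar>\<Sum>n\<in>UNIV. lam $ n * relu (x n \<bullet> u)\<bar> \<le> 1)"

end

theory Submission
  imports Defs
begin

lemma inner_sums_nonneg:
  fixes x :: "'a \<Rightarrow> 'v::real_inner"
  assumes "\<And>i j. i\<in>B \<Longrightarrow> j\<in>C \<Longrightarrow> f i * g j * (x i \<bullet> x j) \<ge> 0"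
  shows "(\<Sum>i\<in>B. f i *\<^sub>R x i) \<bullet> (\<Sum>j\<in>C. g j *\<^sub>R x j) \<ge> 0"
  unfolding inner_sum_left inner_sum_right
proof (intro sum_nonneg)
  fix i j assume "i \<in> B" "j \<in> C"
  then show "0 \<le> f i *\<^sub>R x i \<bullet> g j *\<^sub>R x j"
    using assms[of i j] by (simp add: mult_ac)
qed

lemma sub_norm:
  fixes x :: "'a \<Rightarrow> 'v::real_inner"
  assumes fin: "finite C" and sub: "B \<subseteq> C" and f: "\<And>i. i\<in>C \<Longrightarrow> f i \<ge> 0"
    and xx: "\<And>i j. i\<in>C \<Longrightarrow> j\<in>C \<Longrightarrow> x i \<bullet> x j \<ge> 0"
  shows "(\<Sum>i\<in>B. f i *\<^sub>R x i) \<bullet> (\<Sum>i\<in>B. f i *\<^sub>R x i)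
         \<le> (\<Sum>i\<in>C. f i *\<^sub>R x i) \<bullet> (\<Sum>i\<in>C. f i *\<^sub>R x i)"
proof -
  let ?b = "(\<Sum>i\<in>B. f i *\<^sub>R x i)"
  let ?c = "(\<Sum>i\<in>C-B. f i *\<^sub>R x i)"
  have e: "(\<Sum>i\<in>C. f i *\<^sub>R x i) = ?b + ?c"
    using sum.subset_diff[OF sub fin] by (simp add: add.commute)
  have h1: "?b \<bullet> ?c \<ge> 0"
    by (rule inner_sums_nonneg) (use sub f xx in \<open>auto intro!: mult_nonneg_nonneg\<close>)
  have h2: "?c \<bullet> ?c \<ge> 0" by simp
  show ?thesis unfolding e using h1 h2
    by (simp add: inner_add_left inner_add_right inner_commute)
qed

lemma bound:
  fixes x :: "'n::finite \<Rightarrow> 'v::real_inner"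
  assumes f: "\<And>i. i\<in>C \<Longrightarrow> f i \<ge> 0"
    and xx: "\<And>i j. i\<in>C \<Longrightarrow> j\<in>C \<Longrightarrow> x i \<bullet> x j \<ge> 0"
    and n1: "(\<Sum>i\<in>C. f i *\<^sub>R x i) \<bullet> (\<Sum>i\<in>C. f i *\<^sub>R x i) \<le> 1"
    and u: "norm u \<le> 1"
  shows "0 \<le> (\<Sum>n\<in>C. f n * relu (x n \<bullet> u)) \<and> (\<Sum>n\<in>C. f n * relu (x n \<bullet> u)) \<le> 1"
proof
  show "0 \<le> (\<Sum>n\<in>C. f n * relu (x n \<bullet> u))"
    using f by (auto intro!: sum_nonneg mult_nonneg_nonneg simp: relu_def)
  define T where "T = {n. x n \<bullet> u > 0}"
  have "(\<Sum>n\<in>C. f n * relu (x n \<bullet> u)) = (\<Sum>n\<in>C. if n \<in> T then f n * (x n \<bullet> u) else 0)"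
    by (rule sum.cong) (auto simp: T_def relu_def)
  also have "\<dots> = (\<Sum>n\<in>C \<inter> T. f n * (x n \<bullet> u))"
    by (rule sum.inter_restrict[symmetric]) simp
  also have "\<dots> = (\<Sum>n\<in>C \<inter> T. f n *\<^sub>R x n) \<bullet> u"
    by (simp add: inner_sum_left)
  also have "\<dots> \<le> norm (\<Sum>n\<in>C \<inter> T. f n *\<^sub>R x n) * norm u"
    by (rule norm_cauchy_schwarz)
  also have "\<dots> \<le> 1"
  proof -
    have "(norm (\<Sum>n\<in>C \<inter> T. f n *\<^sub>R x n))^2 \<le> 1^2"
      unfolding power2_norm_eq_inner
      using sub_norm[of C "C \<inter> T" f x] f xx n1 by force
    then have "norm (\<Sum>n\<in>C \<inter> T. f n *\<^sub>R x n) \<le> 1"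
      by (rule power2_le_imp_le) simp
    then show ?thesis using u
      by (metis mult_le_one norm_ge_zero)
  qed
  finally show "(\<Sum>n\<in>C. f n * relu (x n \<bullet> u)) \<le> 1" .
qed



lemma half:
  fixes x :: "'n::finite \<Rightarrow> real^'d" and lam :: "real^'n" and D :: "'n \<Rightarrow> real"
    and w :: "real^'d" and w2i s :: real and y :: "'n \<Rightarrow> real"
  assumes lab: "\<And>n. y n = 1 \<or> y n = -1"
    and os: "orth_separable x y"
    and sgn: "\<And>n. y n * lam$n \<ge> 0"
    and s: "s = 1 \<or> s = -1"
    and w2: "w2i = (\<Sum>n\<in>UNIV. lam $ n * relu (x n \<bullet> w))"
    and adm: "admissible_D x w D"
    and w1: "w = w2i *\<^sub>R (\<Sum>n\<in>UNIV. (D n * lam $ n) *\<^sub>R x n)"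
    and nz: "w2i \<noteq> 0"
    and DC: "\<And>n. y n = s \<Longrightarrow> D n = 1"
  shows "(\<Sum>n\<in>{n. y n = s}. (s * lam$n) *\<^sub>R x n) \<bullet> (\<Sum>n\<in>{n. y n = s}. (s * lam$n) *\<^sub>R x n) \<le> 1"
proof -
  define Cs where "Cs = {n. y n = s}"
  define Os where "Os = {n. y n \<noteq> s}"
  define mu where "mu n = s * lam$n" for n
  define vs where "vs = (\<Sum>n\<in>UNIV. (D n * mu n) *\<^sub>R x n)"
  define c where "c = s * w2i"
  define a where "a = (\<Sum>n\<in>Cs. mu n *\<^sub>R x n)"
  have ss: "s * s = 1" using s by auto
  have muC: "\<And>n. y n = s \<Longrightarrow> mu n \<ge> 0" using sgn by (metis mu_def)
  have muO: "\<And>n. y n \<noteq> s \<Longrightarrow> mu n \<le> 0"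
  proof -
    fix n assume "y n \<noteq> s" then show "mu n \<le> 0"
      using lab[of n] s sgn[of n] by (auto simp: mu_def)
  qed
  have D01: "\<And>n. D n = 0 \<or> D n = 1"
    using adm unfolding admissible_D_def by (metis linorder_neqE_linordered_idom)
  have Dge: "\<And>n. D n \<ge> 0" using D01 by (metis order.refl zero_le_one)
  have inC: "\<And>m n. y m = s \<Longrightarrow> y n = s \<Longrightarrow> x m \<bullet> x n > 0"
    using os unfolding orth_separable_def by auto
  have inCO: "\<And>m n. y m = s \<Longrightarrow> y n \<noteq> s \<Longrightarrow> x m \<bullet> x n \<le> 0"
    using os unfolding orth_separable_def by auto
  have inOC: "\<And>m n. y m \<noteq> s \<Longrightarrow> y n = s \<Longrightarrow> x m \<bullet> x n \<le> 0"
    using os unfolding orth_separable_def by auto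
  have inO: "\<And>m n. y m \<noteq> s \<Longrightarrow> y n \<noteq> s \<Longrightarrow> x m \<bullet> x n > 0"
  proof -
    fix m n assume "y m \<noteq> s" "y n \<noteq> s"
    then have "y m = y n" using lab[of m] lab[of n] s by auto
    then show "x m \<bullet> x n > 0" using os unfolding orth_separable_def by auto
  qed
  have vsS: "vs = s *\<^sub>R (\<Sum>n\<in>UNIV. (D n * lam $ n) *\<^sub>R x n)"
    by (simp add: vs_def mu_def scaleR_sum_right algebra_simps)
  have wv: "w = c *\<^sub>R vs"
    unfolding vsS c_def w1 using ss by (simp add: algebra_simps)
  have xv: "\<And>m. x m \<bullet> vs = (\<Sum>n\<in>UNIV. (D n * mu n) * (x m \<bullet> x n))"
    by (simp add: vs_def inner_sum_right)
  have xvC: "\<And>m. y m = s \<Longrightarrow> x m \<bullet> vs \<ge> 0"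
  proof -
    fix m assume m: "y m = s"
    show "x m \<bullet> vs \<ge> 0" unfolding xv
    proof (intro sum_nonneg)
      fix n show "0 \<le> D n * mu n * (x m \<bullet> x n)"
      proof (cases "y n = s")
        case True
        then show ?thesis using m inC[of m n] muC[of n] Dge[of n] by simp
      next
        case False
        then show ?thesis using m inCO[of m n] muO[of n] Dge[of n]
          by (simp add: mult_nonpos_nonpos mult_nonneg_nonpos)
      qed
    qed
  qed
  have xvO: "\<And>m. y m \<noteq> s \<Longrightarrow> x m \<bullet> vs \<le> 0"
  proof -
    fix m assume m: "y m \<noteq> s"
    show "x m \<bullet> vs \<le> 0" unfolding xv
    proof (intro sum_nonpos)
      fix n show "D n * mu n * (x m \<bullet> x n) \<le> 0"
      proof (cases "y n = s")
        case True
        then show ?thesis using m inOC[of m n] muC[of n] Dge[of n]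
          by (simp add: mult_nonneg_nonpos)
      next
        case False
        then show ?thesis using m inO[of m n] muO[of n] Dge[of n]
          by (simp add: mult_nonpos_nonneg mult_nonneg_nonpos)
      qed
    qed
  qed
  have OsD: "Os = UNIV - Cs" by (auto simp: Os_def Cs_def)
  have split: "\<And>g :: 'n \<Rightarrow> 'z::comm_monoid_add. (\<Sum>n\<in>UNIV. g n) = (\<Sum>n\<in>Cs. g n) + (\<Sum>n\<in>Os. g n)"
    unfolding OsD using sum.subset_diff[of Cs UNIV] by (simp add: add.commute)
  define r where "r = (\<Sum>n\<in>Os. (D n * mu n) *\<^sub>R x n)"
  have vsar: "vs = a + r"
  proof -
    have "(\<Sum>n\<in>Cs. (D n * mu n) *\<^sub>R x n) = a"
      unfolding a_def by (rule sum.cong) (auto simp: Cs_def DC)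
    then show ?thesis unfolding vs_def r_def split[of "\<lambda>n. (D n * mu n) *\<^sub>R x n"] by simp
  qed
  have ar: "a \<bullet> r \<ge> 0" unfolding a_def r_def
  proof (rule inner_sums_nonneg)
    fix i j assume "i \<in> Cs" "j \<in> Os"
    then have "mu i \<ge> 0" "D j * mu j \<le> 0" "x i \<bullet> x j \<le> 0"
      using muC[of i] muO[of j] Dge[of j] inCO[of i j] by (auto simp: Cs_def Os_def mult_nonneg_nonpos)
    then show "0 \<le> mu i * (D j * mu j) * (x i \<bullet> x j)"
      by (simp add: mult_nonpos_nonpos mult_nonneg_nonpos)
  qed
  have aa: "a \<bullet> a \<le> a \<bullet> vs" using ar by (simp add: vsar inner_add_right)
  have avs: "a \<bullet> vs = (\<Sum>m\<in>Cs. mu m * (x m \<bullet> vs))"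
    by (simp add: a_def inner_sum_left)
  have cnz: "c \<noteq> 0" using nz s by (auto simp: c_def)
  have "a \<bullet> vs \<le> 1"
  proof (cases "c > 0")
    case True
    have rC: "\<And>n. n \<in> Cs \<Longrightarrow> relu (x n \<bullet> w) = c * (x n \<bullet> vs)"
      using xvC True by (auto simp: Cs_def wv relu_def)
    have rO: "\<And>n. n \<in> Os \<Longrightarrow> relu (x n \<bullet> w) = 0"
      using xvO True by (auto simp: Os_def wv relu_def mult_pos_neg max_def mult_nonneg_nonpos)
    have "w2i = (\<Sum>n\<in>Cs. lam $ n * (c * (x n \<bullet> vs)))"
      unfolding w2 split[of "\<lambda>n. lam $ n * relu (x n \<bullet> w)"]
      by (simp add: rC rO)
    then have "c = (\<Sum>n\<in>Cs. s * (lam $ n * (c * (x n \<bullet> vs))))"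
      by (metis c_def sum_distrib_left)
    also have "\<dots> = c * (a \<bullet> vs)"
      unfolding avs by (simp add: sum_distrib_left mu_def mult_ac)
    finally have "a \<bullet> vs = 1" using cnz by simp
    then show ?thesis by simp
  next
    case False
    then have cneg: "c < 0" using cnz by simp
    have "\<And>m. m \<in> Cs \<Longrightarrow> x m \<bullet> vs = 0"
    proof -
      fix m assume m: "m \<in> Cs"
      then have "D m = 1" using DC by (simp add: Cs_def)
      then have "\<not> x m \<bullet> w < 0" using adm unfolding admissible_D_def by auto
      then have "c * (x m \<bullet> vs) \<ge> 0" by (simp add: wv)
      then have "x m \<bullet> vs \<le> 0" using cneg
        by (metis linorder_not_le mult_neg_pos not_less)
      then show "x m \<bullet> vs = 0" using xvC[of m] m by (simp add: Cs_def)
    qed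
    then have "a \<bullet> vs = 0" unfolding avs by simp
    then show ?thesis by simp
  qed
  then show ?thesis using aa unfolding a_def Cs_def mu_def by simp
qed


theorem proposition4:
  fixes x :: "'n::finite \<Rightarrow> real^'d"
    and y :: "'n \<Rightarrow> real"
    and w1 :: "'m::finite \<Rightarrow> real^'d"
    and w2 :: "real^'m"
    and lam :: "real^'n"
    and D :: "'m \<Rightarrow> 'n \<Rightarrow> real"
    and ip im :: 'm
  assumes "labels y"
    and "orth_separable x y"
    and "kkt_point x y w1 w2 lam D"
    and "w2 $ ip \<noteq> 0" and "w2 $ im \<noteq> 0"
    and "\<forall>n. D ip n \<ge> (if y n = 1 then 1 else 0)"
    and "\<forall>n. D im n \<ge> (if y n = -1 then 1 else 0)"
  shows "dual_feasible x lam"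
proof -
  note lab = assms(1)[unfolded labels_def, rule_format]
  note os = assms(2)
  note kkt = assms(3)[unfolded kkt_point_def]
  have sgn: "\<And>n. y n * lam$n \<ge> 0" using kkt by blast
  have w2: "\<And>i. w2 $ i = (\<Sum>n\<in>UNIV. lam $ n * relu (x n \<bullet> w1 i))" using kkt by blast
  have adm: "\<And>i. admissible_D x (w1 i) (D i)" using kkt by blast
  have w1: "\<And>i. w1 i = w2 $ i *\<^sub>R (\<Sum>n\<in>UNIV. (D i n * lam $ n) *\<^sub>R x n)" using kkt by blast
  have D01: "\<And>i n. D i n = 0 \<or> D i n = 1"
  proof -
    fix i n
    have "admissible_D x (w1 i) (D i)" by (rule adm)
    then show "D i n = 0 \<or> D i n = 1" unfolding admissible_D_def
      by (metis linorder_neqE_linordered_idom)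
  qed
  have DP: "\<And>n. y n = 1 \<Longrightarrow> D ip n = 1"
  proof -
    fix n assume "y n = 1" then have "1 \<le> D ip n" using assms(6)[rule_format, of n] by simp
    then show "D ip n = 1" using D01[of ip n] by auto
  qed
  have DN: "\<And>n. y n = -1 \<Longrightarrow> D im n = 1"
  proof -
    fix n assume "y n = -1" then have "1 \<le> D im n" using assms(7)[rule_format, of n] by simp
    then show "D im n = 1" using D01[of im n] by auto
  qed
  have hP: "(\<Sum>n\<in>{n. y n = 1}. (1 * lam$n) *\<^sub>R x n) \<bullet> (\<Sum>n\<in>{n. y n = 1}. (1 * lam$n) *\<^sub>R x n) \<le> 1"
    by (rule half[OF lab os sgn _ w2 adm w1 assms(4) DP]) auto
  have hN: "(\<Sum>n\<in>{n. y n = -1}. (-1 * lam$n) *\<^sub>R x n) \<bullet> (\<Sum>n\<in>{n. y n = -1}. (-1 * lam$n) *\<^sub>R x n) \<le> 1"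
    by (rule half[OF lab os sgn _ w2 adm w1 assms(5) DN]) auto
  show ?thesis unfolding dual_feasible_def
  proof (intro allI impI)
    fix u :: "real^'d" assume u: "norm u \<le> 1"
    have bP: "0 \<le> (\<Sum>n\<in>{n. y n = 1}. lam$n * relu (x n \<bullet> u)) \<and> (\<Sum>n\<in>{n. y n = 1}. lam$n * relu (x n \<bullet> u)) \<le> 1"
    proof (rule bound[OF _ _ _ u])
      show "\<And>i. i \<in> {n. y n = 1} \<Longrightarrow> 0 \<le> lam $ i"
      proof - fix i assume "i \<in> {n. y n = 1}" then show "0 \<le> lam $ i" using sgn[of i] by simp qed
      show "\<And>i j. i \<in> {n. y n = 1} \<Longrightarrow> j \<in> {n. y n = 1} \<Longrightarrow> 0 \<le> x i \<bullet> x j"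
        using os unfolding orth_separable_def by (auto intro: less_imp_le)
      show "(\<Sum>i\<in>{n. y n = 1}. lam $ i *\<^sub>R x i) \<bullet> (\<Sum>i\<in>{n. y n = 1}. lam $ i *\<^sub>R x i) \<le> 1"
        using hP by simp
    qed
    have bN: "0 \<le> (\<Sum>n\<in>{n. y n = -1}. (- lam$n) * relu (x n \<bullet> u)) \<and> (\<Sum>n\<in>{n. y n = -1}. (- lam$n) * relu (x n \<bullet> u)) \<le> 1"
    proof (rule bound[OF _ _ _ u])
      show "\<And>i. i \<in> {n. y n = -1} \<Longrightarrow> 0 \<le> - lam $ i"
      proof - fix i assume "i \<in> {n. y n = -1}" then show "0 \<le> - lam $ i" using sgn[of i] by simp qed
      show "\<And>i j. i \<in> {n. y n = -1} \<Longrightarrow> j \<in> {n. y n = -1} \<Longrightarrow> 0 \<le> x i \<bullet> x j"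
        using os unfolding orth_separable_def by (auto intro: less_imp_le)
      show "(\<Sum>i\<in>{n. y n = -1}. (- lam $ i) *\<^sub>R x i) \<bullet> (\<Sum>i\<in>{n. y n = -1}. (- lam $ i) *\<^sub>R x i) \<le> 1"
        using hN by simp
    qed
    have Nd: "{n. y n = -1} = UNIV - {n. y n = 1}" using lab by force
    have "(\<Sum>n\<in>UNIV. lam $ n * relu (x n \<bullet> u)) = (\<Sum>n\<in>{n. y n = 1}. lam$n * relu (x n \<bullet> u)) + (\<Sum>n\<in>{n. y n = -1}. lam$n * relu (x n \<bullet> u))"
      unfolding Nd using sum.subset_diff[of "{n. y n = 1}" UNIV] by (simp add: add.commute)
    also have "(\<Sum>n\<in>{n. y n = -1}. lam$n * relu (x n \<bullet> u)) = - (\<Sum>n\<in>{n. y n = -1}. (- lam$n) * relu (x n \<bullet> u))"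
      by (simp add: sum_negf)
    finally show "\<bar>\<Sum>n\<in>UNIV. lam $ n * relu (x n \<bullet> u)\<bar> \<le> 1" using bP bN by linarith
  qed
qed

end
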